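(* Let $P$ and $Q$ be diassociative loops and let $f:P\to Q$ be a half-isomorphism. Then $f(C(P))=C(Q)$, where $C(L)=\{c\in L: cx=xc \text{ for all } x\in L\}$ denotes the commutant of a loop $L$.
   Context: A loop is diassociative if any two of its elements generate a group. For loops $(L,\ast)$ and $(L',\cdot)$, a bijection $f:L\to L'$ is a half-isomorphism if $f(x\ast y)\in\{f(x)\cdot f(y),\,f(y)\cdot f(x)\}$ for all $x,y\in L$. *)

theory Defs
  imports Main
begin

definition loop :: "'a set \<Rightarrow> ('a \<Rightarrow> 'a \<Rightarrow> 'a) \<Rightarrow> bool" where
  "loop L m \<longleftrightarrow>
     (\<forall>x\<in>L. \<forall>y\<in>L. m x y \<in> L) \<and>
     (\<forall>a\<in>L. \<forall>b\<in>L. \<exists>!x. x \<in> L \<and> m a x = b) \<and>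
     (\<forall>a\<in>L. \<forall>b\<in>L. \<exists>!y. y \<in> L \<and> m y a = b) \<and>
     (\<exists>e\<in>L. \<forall>x\<in>L. m e x = x \<and> m x e = x)"

definition ldiv :: "'a set \<Rightarrow> ('a \<Rightarrow> 'a \<Rightarrow> 'a) \<Rightarrow> 'a \<Rightarrow> 'a \<Rightarrow> 'a" where
  "ldiv L m a b = (THE x. x \<in> L \<and> m a x = b)"

definition rdiv :: "'a set \<Rightarrow> ('a \<Rightarrow> 'a \<Rightarrow> 'a) \<Rightarrow> 'a \<Rightarrow> 'a \<Rightarrow> 'a" where
  "rdiv L m b a = (THE y. y \<in> L \<and> m y a = b)"

definition subloop_closed :: "'a set \<Rightarrow> ('a \<Rightarrow> 'a \<Rightarrow> 'a) \<Rightarrow> 'a set \<Rightarrow> bool" where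
  "subloop_closed L m S \<longleftrightarrow> S \<subseteq> L \<and>
     (\<forall>x\<in>S. \<forall>y\<in>S. m x y \<in> S \<and> ldiv L m x y \<in> S \<and> rdiv L m x y \<in> S)"

definition subloop_gen :: "'a set \<Rightarrow> ('a \<Rightarrow> 'a \<Rightarrow> 'a) \<Rightarrow> 'a set \<Rightarrow> 'a set" where
  "subloop_gen L m X = \<Inter>{S. subloop_closed L m S \<and> X \<subseteq> S}"

text \<open>Diassociative: any two elements generate a group, i.e. the subloop they
  generate is associative (an associative loop is a group).\<close>
definition diassociative :: "'a set \<Rightarrow> ('a \<Rightarrow> 'a \<Rightarrow> 'a) \<Rightarrow> bool" where
  "diassociative L m \<longleftrightarrow> loop L m \<and>
     (\<forall>x\<in>L. \<forall>y\<in>L. \<forall>a\<in>subloop_gen L m {x, y}. \<forall>b\<in>subloop_gen L m {x, y}.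
        \<forall>c\<in>subloop_gen L m {x, y}. m (m a b) c = m a (m b c))"

definition half_isomorphism ::
  "'a set \<Rightarrow> ('a \<Rightarrow> 'a \<Rightarrow> 'a) \<Rightarrow> 'b set \<Rightarrow> ('b \<Rightarrow> 'b \<Rightarrow> 'b) \<Rightarrow> ('a \<Rightarrow> 'b) \<Rightarrow> bool" where
  "half_isomorphism L m L' n f \<longleftrightarrow> bij_betw f L L' \<and>
     (\<forall>x\<in>L. \<forall>y\<in>L. f (m x y) \<in> {n (f x) (f y), n (f y) (f x)})"

definition commutant :: "'a set \<Rightarrow> ('a \<Rightarrow> 'a \<Rightarrow> 'a) \<Rightarrow> 'a set" where
  "commutant L m = {c \<in> L. \<forall>x\<in>L. m c x = m x c}"

end

theory Submission
  imports Defs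
begin

lemma gen_mem: "x \<in> subloop_gen L m X" if "x \<in> X"
  using that unfolding subloop_gen_def by blast

lemma gen_mult:
  assumes a: "a \<in> subloop_gen L m X" and b: "b \<in> subloop_gen L m X"
  shows "m a b \<in> subloop_gen L m X"
  unfolding subloop_gen_def
proof (rule InterI)
  fix S assume "S \<in> {S. subloop_closed L m S \<and> X \<subseteq> S}"
  then have S: "subloop_closed L m S" "X \<subseteq> S" by auto
  have "a \<in> S" "b \<in> S" using a b S unfolding subloop_gen_def by auto
  moreover have "\<forall>x\<in>S. \<forall>y\<in>S. m x y \<in> S \<and> ldiv L m x y \<in> S \<and> rdiv L m x y \<in> S"
    using S(1) unfolding subloop_closed_def by (rule conjunct2)
  ultimately show "m a b \<in> S" by blast
qed

lemma dassoc:
  assumes "diassociative L m" "x \<in> L" "y \<in> L"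
    "a \<in> subloop_gen L m {x,y}" "b \<in> subloop_gen L m {x,y}" "c \<in> subloop_gen L m {x,y}"
  shows "m (m a b) c = m a (m b c)"
proof -
  have "\<forall>x\<in>L. \<forall>y\<in>L. \<forall>a\<in>subloop_gen L m {x, y}. \<forall>b\<in>subloop_gen L m {x, y}.
        \<forall>c\<in>subloop_gen L m {x, y}. m (m a b) c = m a (m b c)"
    using assms(1) unfolding diassociative_def by (rule conjunct2)
  then show ?thesis using assms(2-6) by blast
qed

lemma loop_cl:
  assumes "loop L m" "x \<in> L" "y \<in> L"
  shows "m x y \<in> L"
proof -
  have "\<forall>x\<in>L. \<forall>y\<in>L. m x y \<in> L" using assms(1) unfolding loop_def by (rule conjunct1)
  then show ?thesis using assms(2,3) by blast
qed

lemma loop_l: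
  assumes "loop L m" "a \<in> L" "b \<in> L"
  shows "\<exists>!x. x \<in> L \<and> m a x = b"
proof -
  have "\<forall>a\<in>L. \<forall>b\<in>L. \<exists>!x. x \<in> L \<and> m a x = b"
    using assms(1) unfolding loop_def by (rule conjunct1[OF conjunct2])
  then show ?thesis using assms(2,3) by blast
qed

lemma loop_r:
  assumes "loop L m" "a \<in> L" "b \<in> L"
  shows "\<exists>!y. y \<in> L \<and> m y a = b"
proof -
  have "\<forall>a\<in>L. \<forall>b\<in>L. \<exists>!y. y \<in> L \<and> m y a = b"
    using assms(1) unfolding loop_def by (rule conjunct1[OF conjunct2[OF conjunct2]])
  then show ?thesis using assms(2,3) by blast
qed

lemma ex1_same: "\<exists>!x. P x \<Longrightarrow> P a \<Longrightarrow> P b \<Longrightarrow> a = b"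
  by blast

lemma lcancel:
  assumes "loop L m" "p \<in> L" "q \<in> L" "r \<in> L" "m p q = m p r"
  shows "q = r"
proof -
  have "m p q \<in> L" using loop_cl[OF assms(1,2,3)] .
  then have "\<exists>!z. z \<in> L \<and> m p z = m p q" by (rule loop_l[OF assms(1,2)])
  then show ?thesis by (rule ex1_same) (use assms in auto)
qed

lemma rcancel:
  assumes "loop L m" "p \<in> L" "q \<in> L" "r \<in> L" "m q p = m r p"
  shows "q = r"
proof -
  have "m q p \<in> L" using loop_cl[OF assms(1,3,2)] .
  then have "\<exists>!z. z \<in> L \<and> m z p = m q p" by (rule loop_r[OF assms(1,2)])
  then show ?thesis by (rule ex1_same) (use assms in auto)
qed

lemma gen_sub:
  assumes "loop L m" "X \<subseteq> L"
  shows "subloop_gen L m X \<subseteq> L"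
proof -
  have "subloop_closed L m L"
  proof -
    have "ldiv L m x y \<in> L \<and> rdiv L m x y \<in> L" if "x \<in> L" "y \<in> L" for x y
    proof -
      have e1: "\<exists>!z. z \<in> L \<and> m x z = y" by (rule loop_l[OF assms(1) that])
      have e2: "\<exists>!z. z \<in> L \<and> m z y = x" by (rule loop_r[OF assms(1) that(2,1)])
      show ?thesis unfolding ldiv_def rdiv_def
        using theI'[OF e1] theI'[OF e2] by blast
    qed
    then show ?thesis using loop_cl[OF assms(1)] unfolding subloop_closed_def by blast
  qed
  then show ?thesis using assms(2) unfolding subloop_gen_def by blast
qed

lemma key:
  assumes lP: "loop P mP" and lQ: "loop Q mQ"
    and dP: "diassociative P mP" and dQ: "diassociative Q mQ"
    and h: "half_isomorphism P mP Q mQ f"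
    and x: "x \<in> P" and y: "y \<in> P" and cm: "mP x y = mP y x"
    and fxy: "f (mP x y) = mQ (f x) (f y)"
  shows "mQ (f x) (f y) = mQ (f y) (f x)"
proof (rule ccontr)
  assume ne: "mQ (f x) (f y) \<noteq> mQ (f y) (f x)"
  define a where "a = f x"
  define b where "b = f y"
  have hom: "\<And>u v. u \<in> P \<Longrightarrow> v \<in> P \<Longrightarrow> f (mP u v) = mQ (f u) (f v) \<or> f (mP u v) = mQ (f v) (f u)"
    using h unfolding half_isomorphism_def by auto
  have fP: "\<And>u. u \<in> P \<Longrightarrow> f u \<in> Q" using h unfolding half_isomorphism_def bij_betw_def by auto
  have clP: "\<And>u v. u \<in> P \<Longrightarrow> v \<in> P \<Longrightarrow> mP u v \<in> P" using loop_cl[OF lP] by blast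
  have clQ: "\<And>u v. u \<in> Q \<Longrightarrow> v \<in> Q \<Longrightarrow> mQ u v \<in> Q" using loop_cl[OF lQ] by blast
  have aQ: "a \<in> Q" and bQ: "b \<in> Q" using fP x y a_def b_def by auto
  define G where "G = subloop_gen P mP {x,y}"
  define H where "H = subloop_gen Q mQ {a,b}"
  have xG: "x \<in> G" and yG: "y \<in> G" unfolding G_def by (auto intro: gen_mem)
  have aH: "a \<in> H" and bH: "b \<in> H" unfolding H_def by (auto intro: gen_mem)
  have GM: "\<And>u v. u \<in> G \<Longrightarrow> v \<in> G \<Longrightarrow> mP u v \<in> G" unfolding G_def by (rule gen_mult)
  have HM: "\<And>u v. u \<in> H \<Longrightarrow> v \<in> H \<Longrightarrow> mQ u v \<in> H" unfolding H_def by (rule gen_mult)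
  have HQ: "H \<subseteq> Q" unfolding H_def by (rule gen_sub[OF lQ]) (use aQ bQ in auto)
  have AP: "\<And>p q r. p \<in> G \<Longrightarrow> q \<in> G \<Longrightarrow> r \<in> G \<Longrightarrow> mP (mP p q) r = mP p (mP q r)"
    unfolding G_def by (rule dassoc[OF dP x y]) assumption+
  have AQ: "\<And>p q r. p \<in> H \<Longrightarrow> q \<in> H \<Longrightarrow> r \<in> H \<Longrightarrow> mQ (mQ p q) r = mQ p (mQ q r)"
    unfolding H_def by (rule dassoc[OF dQ aQ bQ]) assumption+
  have LC: "\<And>p q r. p \<in> H \<Longrightarrow> q \<in> H \<Longrightarrow> r \<in> H \<Longrightarrow> mQ p q = mQ p r \<Longrightarrow> q = r"
    by (rule lcancel[OF lQ]) (use HQ in auto)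
  have RC: "\<And>p q r. p \<in> H \<Longrightarrow> q \<in> H \<Longrightarrow> r \<in> H \<Longrightarrow> mQ q p = mQ r p \<Longrightarrow> q = r"
    by (rule rcancel[OF lQ]) (use HQ in auto)
  have ne': "mQ a b \<noteq> mQ b a" using ne a_def b_def by simp
  define u where "u = mP x y"
  have uP: "u \<in> P" using clP x y u_def by simp
  have uG: "u \<in> G" using GM xG yG u_def by simp
  have fu: "f u = mQ a b" using fxy u_def a_def b_def by simp
  have yyP: "mP y y \<in> P" using clP y by simp
  have fyy: "f (mP y y) = mQ b b" using hom[OF y y] b_def by auto
  have e1: "mP u y = mP x (mP y y)" using AP[OF xG yG yG] u_def by simp
  have ab: "mQ a b \<in> H" "mQ b a \<in> H" "mQ b b \<in> H" using HM aH bH by auto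
  have fuy: "f (mP u y) = mQ (mQ a b) b"
  proof -
    have o1: "f (mP u y) = mQ (mQ a b) b \<or> f (mP u y) = mQ b (mQ a b)"
      using hom[OF uP y] fu b_def by auto
    have o2: "f (mP u y) = mQ a (mQ b b) \<or> f (mP u y) = mQ (mQ b b) a"
      using hom[OF x yyP] e1 fyy a_def by auto
    show ?thesis
    proof (rule ccontr)
      assume nn: "f (mP u y) \<noteq> mQ (mQ a b) b"
      then have q1: "f (mP u y) = mQ b (mQ a b)" using o1 by blast
      from o2 show False
      proof
        assume "f (mP u y) = mQ a (mQ b b)"
        then have "mQ (mQ b a) b = mQ (mQ a b) b"
          using q1 AQ[OF bH aH bH] AQ[OF aH bH bH] by simp
        then show False using RC[OF bH ab(2) ab(1)] ne' by auto
      next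
        assume "f (mP u y) = mQ (mQ b b) a"
        then have "mQ b (mQ a b) = mQ b (mQ b a)"
          using q1 AQ[OF bH bH aH] by simp
        then show False using LC[OF bH ab(1) ab(2)] ne' by auto
      qed
    qed
  qed
  define w where "w = mQ (mQ a b) b"
  have wH: "w \<in> H" using HM ab bH w_def by auto
  have uyP: "mP u y \<in> P" using clP uP y by simp
  have e2: "mP u u = mP x (mP u y)"
  proof -
    have "mP u u = mP x (mP y (mP x y))" using AP[OF xG yG uG] u_def by simp
    also have "mP y (mP x y) = mP (mP y x) y" using AP[OF yG xG yG] by simp
    also have "\<dots> = mP u y" using cm u_def by simp
    finally show ?thesis .
  qed
  have fuu: "f (mP u u) = mQ (mQ a b) (mQ a b)" using hom[OF uP uP] fu by auto
  have o3: "f (mP u u) = mQ a w \<or> f (mP u u) = mQ w a"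
    using hom[OF x uyP] e2 fuy w_def a_def by auto
  from o3 show False
  proof
    assume "f (mP u u) = mQ a w"
    then have "mQ a (mQ b (mQ a b)) = mQ a (mQ (mQ a b) b)"
      using fuu w_def AQ[OF aH bH ab(1)] by simp
    then have "mQ b (mQ a b) = mQ (mQ a b) b"
      using LC[OF aH] HM bH ab by blast
    then have "mQ (mQ b a) b = mQ (mQ a b) b" using AQ[OF bH aH bH] by simp
    then show False using RC[OF bH ab(2) ab(1)] ne' by auto
  next
    assume "f (mP u u) = mQ w a"
    then have "mQ (mQ a b) (mQ a b) = mQ (mQ a b) (mQ b a)"
      using fuu w_def AQ[OF ab(1) bH aH] by simp
    then show False using LC[OF ab(1) ab(1) ab(2)] ne' by auto
  qed
qed

theorem lemma2p4:
  fixes P :: "'a set" and mP :: "'a \<Rightarrow> 'a \<Rightarrow> 'a"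
    and Q :: "'b set" and mQ :: "'b \<Rightarrow> 'b \<Rightarrow> 'b"
    and f :: "'a \<Rightarrow> 'b"
  assumes "loop P mP" and "loop Q mQ"
    and "diassociative P mP" and "diassociative Q mQ"
    and "half_isomorphism P mP Q mQ f"
  shows "f ` commutant P mP = commutant Q mQ"
proof -
  have hom: "\<And>u v. u \<in> P \<Longrightarrow> v \<in> P \<Longrightarrow> f (mP u v) = mQ (f u) (f v) \<or> f (mP u v) = mQ (f v) (f u)"
    using assms(5) unfolding half_isomorphism_def by auto
  have bij: "bij_betw f P Q" using assms(5) unfolding half_isomorphism_def by auto
  have comm: "mQ (f x) (f y) = mQ (f y) (f x)" if "x \<in> P" "y \<in> P" "mP x y = mP y x" for x y
  proof -
    from hom[OF that(1,2)] show ?thesis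
    proof
      assume "f (mP x y) = mQ (f x) (f y)"
      then show ?thesis using key[OF assms that] by simp
    next
      assume "f (mP x y) = mQ (f y) (f x)"
      then have "f (mP y x) = mQ (f y) (f x)" using that(3) by simp
      then show ?thesis using key[OF assms that(2,1) that(3)[symmetric]] by simp
    qed
  qed
  show ?thesis
  proof
    show "f ` commutant P mP \<subseteq> commutant Q mQ"
    proof
      fix d assume "d \<in> f ` commutant P mP"
      then obtain c where c: "c \<in> P" "\<forall>x\<in>P. mP c x = mP x c" "d = f c"
        unfolding commutant_def by auto
      have "d \<in> Q" using c bij bij_betwE by blast
      moreover have "mQ d z = mQ z d" if zQ: "z \<in> Q" for z
      proof -
        have "z \<in> f ` P" using zQ bij_betw_imp_surj_on[OF bij] by simp
        then obtain x where "x \<in> P" "z = f x" by (rule imageE) simp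
        then show ?thesis using comm[of c x] c by simp
      qed
      ultimately show "d \<in> commutant Q mQ" unfolding commutant_def by auto
    qed
  next
    show "commutant Q mQ \<subseteq> f ` commutant P mP"
    proof
      fix d assume d: "d \<in> commutant Q mQ"
      have "d \<in> Q" using d unfolding commutant_def by simp
      then have "d \<in> f ` P" using bij_betw_imp_surj_on[OF bij] by simp
      then obtain c where c: "c \<in> P" "d = f c" by (rule imageE) simp
      have dc: "\<forall>z\<in>Q. mQ d z = mQ z d" using d unfolding commutant_def by auto
      have "mP c x = mP x c" if x: "x \<in> P" for x
      proof -
        have fx: "f x \<in> Q" using x bij bij_betwE by blast
        have "f (mP c x) = mQ d (f x)" using hom[OF c(1) x] dc fx c(2) by auto
        moreover have "f (mP x c) = mQ d (f x)" using hom[OF x c(1)] dc fx c(2) by auto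
        moreover have "mP c x \<in> P" "mP x c \<in> P" using loop_cl[OF assms(1)] c x by auto
        ultimately show ?thesis using inj_onD[OF bij_betw_imp_inj_on[OF bij]] by simp
      qed
      then show "d \<in> f ` commutant P mP" using c unfolding commutant_def by auto
    qed
  qed
qed

end
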